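(* Let $d\ge 2$. There are a constant $C>0$ and $n_0(d)$ depending only on $d$ such that for all $n\ge n_0(d)$: if $\mathcal{F}$, $B_i$ are as in the context, $J\subseteq[n]$ with $|J|\le n/4$, and $K\ge 0$ is a real number with $|E(\mathcal{G}_J)|\ge\binom{n-|J|}{d}-Kn$, then $$|\mathcal{T}_J^2\cup\mathcal{T}_J^3|\le\binom{n-|J|}{d}+C\left(K+\sqrt{Kn^{d-1}}+n^{d-2}\right).$$
   Context: Let $\mathcal{F}=\{F_1,\dots,F_m\}\subseteq\binom{[n]}{d+1}$ consist of distinct sets and have VC-dimension at most $d$ (no $(d+1)$-set $S$ is shattered, i.e. no $S$ such that every $A\subseteq S$ equals $F\cap S$ for some $F\in\mathcal{F}$). For $i\in[m]$, call $B\subsetneq F_i$ admissible for $F_i$ if $F\cap F_i\neq B$ for every $F\in\mathcal{F}$. For each $i$, $B_i$ is a fixed admissible set for $F_i$ of maximum cardinality among all admissible sets. For $J\subseteq[n]$, $\mathcal{G}_J$ is the $d$-uniform hypergraph on vertex set $[n]\setminus J$ with edge set $E(\mathcal{G}_J):=\{F_k\setminus J: k\in[m],\ |F_k\cap J|=1\}$. $\mathcal{T}_J^2$ is the set of $F_k\in\mathcal{F}$ with $B_k\subseteq[n]\setminus J$ and $|B_k|=d$; $\mathcal{T}_J^3$ is the set of $F_k\in\mathcal{F}$ with $|F_k\cap J|=1$, $B_k\subseteq[n]\setminus J$ and $|B_k|=d-1$. *)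

theory Defs
  imports Complex_Main
begin

definition shattered :: "nat \<Rightarrow> (nat \<Rightarrow> nat set) \<Rightarrow> nat set \<Rightarrow> bool" where
  "shattered m F S \<longleftrightarrow> (\<forall>A. A \<subseteq> S \<longrightarrow> (\<exists>k\<in>{1..m}. F k \<inter> S = A))"

definition vc_dim_le :: "nat \<Rightarrow> nat \<Rightarrow> (nat \<Rightarrow> nat set) \<Rightarrow> nat \<Rightarrow> bool" where
  "vc_dim_le n m F d \<longleftrightarrow> (\<forall>S. S \<subseteq> {1..n} \<and> card S = d + 1 \<longrightarrow> \<not> shattered m F S)"

definition admissible :: "nat \<Rightarrow> (nat \<Rightarrow> nat set) \<Rightarrow> nat \<Rightarrow> nat set \<Rightarrow> bool" where
  "admissible m F i B \<longleftrightarrow> B \<subset> F i \<and> (\<forall>k\<in>{1..m}. F k \<inter> F i \<noteq> B)"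

definition edges_G :: "nat \<Rightarrow> (nat \<Rightarrow> nat set) \<Rightarrow> nat set \<Rightarrow> nat set set" where
  "edges_G m F J = {F k - J | k. k \<in> {1..m} \<and> card (F k \<inter> J) = 1}"

definition T2 :: "nat \<Rightarrow> nat \<Rightarrow> nat \<Rightarrow> (nat \<Rightarrow> nat set) \<Rightarrow> (nat \<Rightarrow> nat set) \<Rightarrow> nat set \<Rightarrow> nat set set" where
  "T2 n d m F B J = {F k | k. k \<in> {1..m} \<and> B k \<subseteq> {1..n} - J \<and> card (B k) = d}"

definition T3 :: "nat \<Rightarrow> nat \<Rightarrow> nat \<Rightarrow> (nat \<Rightarrow> nat set) \<Rightarrow> (nat \<Rightarrow> nat set) \<Rightarrow> nat set \<Rightarrow> nat set set" where
  "T3 n d m F B J = {F k | k. k \<in> {1..m} \<and> card (F k \<inter> J) = 1 \<and> B k \<subseteq> {1..n} - J \<and> card (B k) = d - 1}"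

end

theory Submission
  imports Defs
begin


lemma fiber_bound:
  assumes "finite A" "\<And>y. y \<in> f ` A \<Longrightarrow> card {x\<in>A. f x = y} \<le> c"
  shows "card A \<le> c * card (f ` A)"
proof -
  have "A = (\<Union>y\<in>f ` A. {x\<in>A. f x = y})" by auto
  hence "card A = card (\<Union>y\<in>f ` A. {x\<in>A. f x = y})" by simp
  also have "\<dots> = (\<Sum>y\<in>f ` A. card {x\<in>A. f x = y})"
    by (rule card_UN_disjoint) (use assms(1) in auto)
  also have "\<dots> \<le> (\<Sum>y\<in>f ` A. c)" by (rule sum_mono) (use assms(2) in auto)
  also have "\<dots> = c * card (f ` A)" by simp
  finally show ?thesis .
qed

lemma double_count:
  assumes "finite X" "finite Y"
  shows "(\<Sum>x\<in>X. card {y\<in>Y. R x y}) = (\<Sum>y\<in>Y. card {x\<in>X. R x y})"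
proof -
  have "(\<Sum>x\<in>X. card {y\<in>Y. R x y}) = (\<Sum>x\<in>X. \<Sum>y\<in>Y. if R x y then 1 else 0)"
    using assms by (simp add: sum.If_cases Int_def)
  also have "\<dots> = (\<Sum>y\<in>Y. \<Sum>x\<in>X. if R x y then 1 else 0)" by (rule sum.swap)
  also have "\<dots> = (\<Sum>y\<in>Y. card {x\<in>X. R x y})"
    using assms by (simp add: sum.If_cases Int_def)
  finally show ?thesis .
qed

lemma c2: "card {a, b} \<le> 2"
proof -
  have "card {a,b} \<le> Suc (card {b})" by (rule card_insert_le_m1) auto
  thus ?thesis by simp
qed



locale setting =
  fixes n m d :: nat and F B :: "nat \<Rightarrow> nat set" and J :: "nat set"
  assumes d2: "d \<ge> 2"
  and Fsub: "\<And>i. i\<in>{1..m} \<Longrightarrow> F i \<subseteq> {1..n}"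
  and Fcard: "\<And>i. i\<in>{1..m} \<Longrightarrow> card (F i) = d+1"
  and inj: "inj_on F {1..m}"
  and Bsub: "\<And>i. i\<in>{1..m} \<Longrightarrow> B i \<subset> F i"
  and adm: "\<And>i k. i\<in>{1..m} \<Longrightarrow> k\<in>{1..m} \<Longrightarrow> F k \<inter> F i \<noteq> B i"
  and maxi: "\<And>i B'. i\<in>{1..m} \<Longrightarrow> admissible m F i B' \<Longrightarrow> card B' \<le> card (B i)"
  and Jsub: "J \<subseteq> {1..n}"
begin

definition "V = {1..n} - J"
definition "I2 = {k\<in>{1..m}. B k \<subseteq> V \<and> card (B k) = d}"
definition "I3 = {k\<in>{1..m}. card (F k \<inter> J) = 1 \<and> B k \<subseteq> V \<and> card (B k) = d - 1}"
definition "EE = edges_G m F J"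
definition "Miss = {D. D \<subseteq> V \<and> card D = d} - EE"
definition "jj k = the_elem (F k \<inter> J)"
definition "xx k = the_elem (F k - J - B k)"

lemma finV: "finite V" unfolding V_def by simp
lemma finJ: "finite J" using Jsub finite_subset by blast
lemma finF: "k \<in> {1..m} \<Longrightarrow> finite (F k)" using Fsub finite_subset by blast

lemma block:
  assumes "k \<in> {1..m}" "q \<in> {1..m}" "F k = insert a (insert b (B k))" "B k \<subseteq> F q" "a \<notin> F q"
  shows "b \<in> F q"
proof (rule ccontr)
  assume "b \<notin> F q"
  hence "F q \<inter> F k = B k" using assms by auto
  thus False using adm assms by blast
qed

lemma I3_struct:
  assumes "k \<in> I3"
  shows "F k \<inter> J = {jj k}" "F k - J = insert (xx k) (B k)" "xx k \<notin> B k" "xx k \<in> V"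
        "jj k \<in> J" "F k = insert (jj k) (insert (xx k) (B k))" "B k \<inter> J = {}"
        "card (F k - J) = d" "B k \<subseteq> V" "card (B k) = d - 1" "k \<in> {1..m}" "F k - J \<subseteq> V"
proof -
  have k: "k \<in> {1..m}" "card (F k \<inter> J) = 1" "B k \<subseteq> V" "card (B k) = d - 1"
    using assms unfolding I3_def by auto
  show "k \<in> {1..m}" "B k \<subseteq> V" "card (B k) = d - 1" using k by auto
  have fk: "finite (F k)" using finF k by blast
  obtain j where j: "F k \<inter> J = {j}" using k(2) card_1_singletonE by blast
  show fj: "F k \<inter> J = {jj k}" unfolding jj_def using j by simp
  thus "jj k \<in> J" by auto
  have cd: "card (F k - J) = d" using card_Diff_subset_Int[of "F k" J] fk k fj Fcard[OF k(1)]
    by (simp add: Int_commute)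
  thus "card (F k - J) = d" .
  have BJ: "B k \<inter> J = {}" using k(3) unfolding V_def by auto
  thus "B k \<inter> J = {}" .
  have BF: "B k \<subseteq> F k - J" using Bsub[OF k(1)] BJ by auto
  have fb: "finite (B k)" using fk Bsub[OF k(1)] finite_subset by blast
  have "card (F k - J - B k) = 1" using card_Diff_subset[OF fb BF] cd k(4) d2 by simp
  then obtain x where x: "F k - J - B k = {x}" using card_1_singletonE by blast
  hence xe: "xx k = x" unfolding xx_def by simp
  show fe: "F k - J = insert (xx k) (B k)" using x xe BF by auto
  show "xx k \<notin> B k" using x xe by auto
  show "F k - J \<subseteq> V" using Fsub[OF k(1)] unfolding V_def by auto
  thus "xx k \<in> V" using fe by auto
  have "F k = (F k \<inter> J) \<union> (F k - J)" by blast
  also have "\<dots> = {jj k} \<union> insert (xx k) (B k)" by (simp only: fe fj)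
  also have "\<dots> = insert (jj k) (insert (xx k) (B k))" by blast
  finally show "F k = insert (jj k) (insert (xx k) (B k))" .
qed

lemma block3:
  assumes "k \<in> I3" "q \<in> {1..m}" "B k \<subseteq> F q" "xx k \<notin> F q"
  shows "jj k \<in> F q"
proof -
  have "k \<in> {1..m}" "F k = insert (xx k) (insert (jj k) (B k))"
    using I3_struct(6,11)[OF assms(1)] by (auto simp: insert_commute)
  thus ?thesis using block[of k q "xx k" "jj k"] assms by blast
qed

lemma I2_struct:
  assumes "k \<in> I2"
  obtains x where "F k = insert x (B k)" "x \<notin> B k"
proof -
  have k: "k \<in> {1..m}" "B k \<subseteq> V" "card (B k) = d" using assms unfolding I2_def by auto
  have fk: "finite (F k)" using finF k by blast
  have fb: "finite (B k)" using fk Bsub[OF k(1)] finite_subset by blast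
  have "card (F k - B k) = 1" using card_Diff_subset[OF fb] Bsub[OF k(1)] Fcard[OF k(1)] k(3) by auto
  then obtain x where x: "F k - B k = {x}" using card_1_singletonE by blast
  show ?thesis using that[of x] x Bsub[OF k(1)] by auto
qed

lemma I2_inj:
  assumes "k \<in> I2" "l \<in> I2" "B k = B l"
  shows "k = l"
proof -
  obtain x where x: "F k = insert x (B k)" "x \<notin> B k" using I2_struct[OF assms(1)] by blast
  obtain y where y: "F l = insert y (B l)" "y \<notin> B l" using I2_struct[OF assms(2)] by blast
  have km: "k \<in> {1..m}" "l \<in> {1..m}" using assms unfolding I2_def by auto
  show ?thesis
  proof (cases "x = y")
    case True
    hence "F k = F l" using x y assms(3) by simp
    thus ?thesis using inj_onD[OF inj] km by blast
  next
    case False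
    hence "F l \<inter> F k = B k" using x y assms(3) by auto
    thus ?thesis using adm km by blast
  qed
qed

lemma I2_I3:
  assumes "k \<in> I2" "l \<in> I3" "B k = F l - J"
  shows False
proof -
  obtain x where x: "F k = insert x (B k)" "x \<notin> B k" using I2_struct[OF assms(1)] by blast
  have km: "k \<in> {1..m}" "card (B k) = d" using assms unfolding I2_def by auto
  note S = I3_struct[OF assms(2)]
  have Fl: "F l = insert (jj l) (B k)" using S(6) S(2) assms(3) by auto
  show ?thesis
  proof (cases "x = jj l")
    case True
    hence "F k = F l" using x Fl by simp
    hence "k = l" using inj_onD[OF inj] km S(11) by blast
    thus False using km S(10) d2 by simp
  next
    case False
    have "jj l \<notin> B k" using S(5) assms(3) by auto
    hence "F l \<inter> F k = B k" using x Fl False by auto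
    thus False using adm km S(11) by blast
  qed
qed

end


context setting begin

definition "P = {(k,l). k \<in> I3 \<and> l \<in> I3 \<and> k \<noteq> l \<and> F k - J = F l - J}"
definition "Sd = {D. D \<subseteq> V \<and> card D = d}"

lemma finI2: "finite I2" unfolding I2_def by simp
lemma finI3: "finite I3" unfolding I3_def by simp
lemma finP: "finite P"
proof -
  have "P \<subseteq> I3 \<times> I3" unfolding P_def by auto
  thus ?thesis using finI3 finite_subset by blast
qed
lemma finSd: "finite Sd"
proof -
  have "Sd \<subseteq> Pow V" unfolding Sd_def by auto
  thus ?thesis using finV finite_subset by blast
qed

lemma main_inj: "card (I2 \<union> I3) \<le> card Sd + card P"
proof -
  define g where "g k = (if k \<in> I2 then Inl (B k) else if (\<exists>l. (k,l) \<in> P) then Inr (k, SOME l. (k,l) \<in> P) else Inl (F k - J))" for k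
  have img: "g ` (I2 \<union> I3) \<subseteq> Sd <+> P"
  proof
    fix z assume "z \<in> g ` (I2 \<union> I3)"
    then obtain k where k: "k \<in> I2 \<union> I3" "z = g k" by blast
    show "z \<in> Sd <+> P"
    proof (cases "k \<in> I2")
      case True
      thus ?thesis using k unfolding g_def I2_def Sd_def by auto
    next
      case False
      hence k3: "k \<in> I3" using k by auto
      show ?thesis
      proof (cases "\<exists>l. (k,l) \<in> P")
        case True
        hence "(k, SOME l. (k,l) \<in> P) \<in> P" by (rule someI_ex)
        thus ?thesis using k False True unfolding g_def by auto
      next
        case nP: False
        have "F k - J \<in> Sd" using I3_struct(8,12)[OF k3] unfolding Sd_def by auto
        thus ?thesis using k False nP unfolding g_def by auto
      qed
    qed
  qed
  have inj: "inj_on g (I2 \<union> I3)"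
  proof (rule inj_onI)
    fix k l assume kl: "k \<in> I2 \<union> I3" "l \<in> I2 \<union> I3" "g k = g l"
    show "k = l"
    proof (cases "k \<in> I2")
      case kT: True
      show ?thesis
      proof (cases "l \<in> I2")
        case True
        thus ?thesis using kT kl I2_inj unfolding g_def by auto
      next
        case False
        hence l3: "l \<in> I3" using kl by auto
        show ?thesis
        proof (cases "\<exists>l'. (l,l') \<in> P")
          case True thus ?thesis using kl kT False unfolding g_def by auto
        next
          case nP: False
          hence "B k = F l - J" using kl kT False unfolding g_def by auto
          thus ?thesis using I2_I3 kT l3 by blast
        qed
      qed
    next
      case kF: False
      hence k3: "k \<in> I3" using kl by auto
      show ?thesis
      proof (cases "l \<in> I2")
        case lT: True
        show ?thesis
        proof (cases "\<exists>l'. (k,l') \<in> P")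
          case True thus ?thesis using kl kF lT unfolding g_def by auto
        next
          case nP: False
          hence "B l = F k - J" using kl kF lT unfolding g_def by auto
          thus ?thesis using I2_I3 lT k3 by blast
        qed
      next
        case lF: False
        hence l3: "l \<in> I3" using kl by auto
        show ?thesis
        proof (cases "\<exists>l'. (k,l') \<in> P")
          case kP: True
          show ?thesis
          proof (cases "\<exists>l'. (l,l') \<in> P")
            case True thus ?thesis using kl kF lF kP unfolding g_def by auto
          next
            case False thus ?thesis using kl kF lF kP unfolding g_def by auto
          qed
        next
          case nkP: False
          show ?thesis
          proof (cases "\<exists>l'. (l,l') \<in> P")
            case True thus ?thesis using kl kF lF nkP unfolding g_def by auto
          next
            case False
            hence "F k - J = F l - J" using kl kF lF nkP unfolding g_def by auto
            thus ?thesis using nkP k3 l3 unfolding P_def by blast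
          qed
        qed
      qed
    qed
  qed
  have "card (I2 \<union> I3) = card (g ` (I2 \<union> I3))" using card_image[OF inj] by simp
  also have "\<dots> \<le> card (Sd <+> P)" by (rule card_mono) (use img finSd finP in auto)
  also have "\<dots> = card Sd + card P" using card_Plus[OF finSd finP] .
  finally show ?thesis .
qed

end


context setting begin

definition "Psame = {(k,l)\<in>P. B k = B l}"
definition "Pdiff = {(k,l)\<in>P. B k \<noteq> B l}"
definition "DB = (\<lambda>(k,l). B k) ` Psame"

lemma VJ: "V \<inter> J = {}" unfolding V_def by auto

lemma same_x:
  assumes "k \<in> I3" "l \<in> I3" "F k - J = F l - J" "B k = B l"
  shows "xx k = xx l"
  using I3_struct(2,3)[OF assms(1)] I3_struct(2,3)[OF assms(2)] assms(3,4) by (metis insert_iff)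

lemma jj_ne:
  assumes "(k,l) \<in> P"
  shows "jj k \<noteq> jj l"
proof
  assume e: "jj k = jj l"
  have kl: "k \<in> I3" "l \<in> I3" "k \<noteq> l" "F k - J = F l - J" using assms unfolding P_def by auto
  have "F k = (F k \<inter> J) \<union> (F k - J)" by blast
  also have "\<dots> = (F l \<inter> J) \<union> (F l - J)" using I3_struct(1)[OF kl(1)] I3_struct(1)[OF kl(2)] e kl(4) by simp
  also have "\<dots> = F l" by blast
  finally have "F k = F l" .
  thus False using inj_onD[OF inj] I3_struct(11)[OF kl(1)] I3_struct(11)[OF kl(2)] kl(3) by blast
qed

lemma jj_eq_F:
  assumes "k \<in> I3" "l \<in> I3" "F k - J = F l - J" "jj k = jj l"
  shows "k = l"
proof -
  have "F k = (F k \<inter> J) \<union> (F k - J)" by blast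
  also have "\<dots> = (F l \<inter> J) \<union> (F l - J)" using I3_struct(1)[OF assms(1)] I3_struct(1)[OF assms(2)] assms by simp
  also have "\<dots> = F l" by blast
  finally have "F k = F l" .
  thus ?thesis using inj_onD[OF inj] I3_struct(11)[OF assms(1)] I3_struct(11)[OF assms(2)] by blast
qed

lemma L2:
  assumes kl: "(k,l) \<in> Psame" and q: "q \<in> I3" "B q = B k"
  shows "q = k \<or> q = l"
proof -
  have kl': "(k,l) \<in> P" "B k = B l" using kl unfolding Psame_def by auto
  have k3: "k \<in> I3" and l3: "l \<in> I3" and ne: "k \<noteq> l" and e: "F k - J = F l - J"
    using kl'(1) unfolding P_def by auto
  note Sk = I3_struct[OF k3] and Sl = I3_struct[OF l3] and Sq = I3_struct[OF q(1)]
  define x where "x = xx k"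
  have xl: "xx l = x" using same_x[OF k3 l3 e kl'(2)] x_def by simp
  have jkl: "jj k \<noteq> jj l" using jj_ne[OF kl'(1)] .
  show ?thesis
  proof (cases "xx q = x")
    case False
    have "x \<notin> F q"
    proof -
      have "x \<noteq> jj q" using Sk(4) Sq(5) VJ x_def by auto
      moreover have "x \<notin> B q" using q(2) Sk(3) x_def by simp
      ultimately show ?thesis using Sq(6) False by auto
    qed
    moreover have "B k \<subseteq> F q" using Sq(6) q(2) by auto
    ultimately have "jj k \<in> F q" "jj l \<in> F q"
      using block3[OF k3 Sq(11)] block3[OF l3 Sq(11)] kl'(2) xl x_def by auto
    hence "jj k \<in> F q \<inter> J" "jj l \<in> F q \<inter> J" using Sk(5) Sl(5) by auto
    hence False using Sq(1) jkl by auto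
    thus ?thesis ..
  next
    case True
    show ?thesis
    proof (rule ccontr)
      assume nq: "\<not> (q = k \<or> q = l)"
      have eq: "F q - J = F k - J" using Sq(2) Sk(2) True q(2) x_def by simp
      have jqk: "jj q \<noteq> jj k" using jj_eq_F[OF q(1) k3 eq] nq by blast
      have eq2: "F q - J = F l - J" using eq e by simp
      have jql: "jj q \<noteq> jj l" using jj_eq_F[OF q(1) l3 eq2] nq by blast
      define D where "D = insert (jj k) (B k)"
      have xD: "x \<notin> D" using Sk(3) Sk(4) Sk(5) VJ x_def D_def by auto
      have xF: "x \<in> F k" using Sk(6) x_def by auto
      have DF: "D \<subset> F k" using Sk(6) xD xF D_def by auto
      have jB: "jj k \<notin> B k" using Sk(5) Sk(7) by auto
      have finB: "finite (B k)" using Sk(9) finV finite_subset by blast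
      have cD: "card D = d" using D_def jB finB Sk(10) d2 by simp
      have "\<not> admissible m F k D"
      proof
        assume "admissible m F k D"
        hence "card D \<le> card (B k)" using maxi Sk(11) by blast
        thus False using cD Sk(10) d2 by simp
      qed
      then obtain r where r: "r \<in> {1..m}" "F r \<inter> F k = D" using DF unfolding admissible_def by blast
      have Br: "B k \<subseteq> F r" "x \<notin> F r" "jj k \<in> F r" using r(2) xF xD D_def by auto
      have "jj l \<in> F r" using block3[OF l3 r(1)] Br kl'(2) xl by auto
      moreover have "jj q \<in> F r" using block3[OF q(1) r(1)] Br q(2) True by auto
      ultimately have sub: "insert (jj k) (insert (jj l) (insert (jj q) (B k))) \<subseteq> F r" using Br by auto
      have "jj l \<notin> B k" "jj q \<notin> B k" using Sl(5) Sq(5) Sk(7) by auto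
      hence "card (insert (jj k) (insert (jj l) (insert (jj q) (B k)))) = d + 2"
        using jqk jql jkl jB finB Sk(10) d2 by auto
      moreover have "card (insert (jj k) (insert (jj l) (insert (jj q) (B k)))) \<le> card (F r)"
        by (rule card_mono[OF finF[OF r(1)] sub])
      ultimately show False using Fcard[OF r(1)] by simp
    qed
  qed
qed

lemma finDB: "finite DB"
proof -
  have "Psame \<subseteq> P" unfolding Psame_def by auto
  thus ?thesis unfolding DB_def using finP finite_subset by blast
qed

lemma Psame_card: "card Psame \<le> 2 * card DB"
proof -
  have fPs: "finite Psame" using finP finite_subset[of Psame P] unfolding Psame_def by auto
  have "card Psame \<le> 2 * card ((\<lambda>(k,l). B k) ` Psame)"
  proof (rule fiber_bound[OF fPs])
    fix y assume "y \<in> (\<lambda>(k,l). B k) ` Psame"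
    then obtain k0 l0 where kl0: "(k0,l0) \<in> Psame" "y = B k0" by auto
    have sub: "{z\<in>Psame. (\<lambda>(k,l). B k) z = y} \<subseteq> {(k0,l0),(l0,k0)}"
    proof
      fix z assume z: "z \<in> {z\<in>Psame. (\<lambda>(k,l). B k) z = y}"
      obtain k l where zkl: "z = (k,l)" by (cases z)
      have zz: "(k,l) \<in> Psame" "B k = B k0" using z zkl kl0 by auto
      have k3: "k \<in> I3" "l \<in> I3" "k \<noteq> l" "B k = B l" using zz(1) unfolding Psame_def P_def by auto
      have "k = k0 \<or> k = l0" using L2[OF kl0(1) k3(1) zz(2)] .
      moreover have "l = k0 \<or> l = l0" using L2[OF kl0(1) k3(2)] zz(2) k3(4) by simp
      ultimately show "z \<in> {(k0,l0),(l0,k0)}" using zkl k3(3) by auto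
    qed
    have fin2: "finite {(k0,l0),(l0,k0)}" by simp
    have "card {z\<in>Psame. (\<lambda>(k,l). B k) z = y} \<le> card {(k0,l0),(l0,k0)}" by (rule card_mono[OF fin2 sub])
    also have "\<dots> \<le> 2" by (rule c2)
    finally show "card {z\<in>Psame. (\<lambda>(k,l). B k) z = y} \<le> 2" .
  qed
  thus ?thesis unfolding DB_def .
qed

lemma finMiss: "finite Miss"
proof -
  have "Miss \<subseteq> Pow V" unfolding Miss_def by auto
  thus ?thesis using finV finite_subset by blast
qed

lemma Miss_I: 
  assumes "D \<subseteq> V" "card D = d"
   "\<And>q. q \<in> {1..m} \<Longrightarrow> card (F q \<inter> J) = 1 \<Longrightarrow> D = F q - J \<Longrightarrow> False"
  shows "D \<in> Miss"
  using assms unfolding Miss_def EE_def edges_G_def by blast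

lemma card1_eq: "card A = 1 \<Longrightarrow> a \<in> A \<Longrightarrow> b \<in> A \<Longrightarrow> a = b"
  by (metis card_1_singletonE singletonD)

lemma DB_miss:
  assumes kl: "(k,l) \<in> Psame" and y: "y \<in> V - (F k - J)"
  shows "insert y (B k) \<in> Miss"
proof -
  have kl': "(k,l) \<in> P" "B k = B l" using kl unfolding Psame_def by auto
  have k3: "k \<in> I3" and l3: "l \<in> I3" and e: "F k - J = F l - J"
    using kl'(1) unfolding P_def by auto
  note Sk = I3_struct[OF k3] and Sl = I3_struct[OF l3]
  have xl: "xx l = xx k" using same_x[OF k3 l3 e kl'(2)] by simp
  have jkl: "jj k \<noteq> jj l" using jj_ne[OF kl'(1)] .
  have finB: "finite (B k)" using Sk(9) finV finite_subset by blast
  have yB: "y \<notin> B k" using y Sk(2) by auto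
  show ?thesis
  proof (rule Miss_I)
    show "insert y (B k) \<subseteq> V" using y Sk(9) by auto
    show "card (insert y (B k)) = d" using yB finB Sk(10) d2 by simp
    fix q assume q: "q \<in> {1..m}" "card (F q \<inter> J) = 1" "insert y (B k) = F q - J"
    have BF: "B k \<subseteq> F q" using q(3) by auto
    have "xx k \<notin> F q"
    proof
      assume "xx k \<in> F q"
      moreover have "xx k \<notin> J" using Sk(4) VJ by auto
      ultimately have "xx k \<in> insert y (B k)" using q(3) by auto
      thus False using Sk(2,3) y by auto
    qed
    hence "jj k \<in> F q" "jj l \<in> F q" using block3[OF k3 q(1) BF] block3[OF l3 q(1)] BF kl'(2) xl by auto
    hence "jj k \<in> F q \<inter> J" "jj l \<in> F q \<inter> J" using Sk(5) Sl(5) by auto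
    thus False using card1_eq[OF q(2)] jkl by blast
  qed
qed

lemma DB_count:
  assumes "B0 \<in> DB"
  shows "card V - d \<le> card {D\<in>Miss. B0 \<subseteq> D}"
proof -
  obtain k l where kl: "(k,l) \<in> Psame" "B0 = B k" using assms unfolding DB_def by auto
  have k3: "k \<in> I3" using kl unfolding Psame_def P_def by auto
  note Sk = I3_struct[OF k3]
  have "(\<lambda>y. insert y B0) ` (V - (F k - J)) \<subseteq> {D\<in>Miss. B0 \<subseteq> D}"
    using DB_miss[OF kl(1)] kl(2) by auto
  moreover have "inj_on (\<lambda>y. insert y B0) (V - (F k - J))"
  proof (rule inj_onI)
    fix y z assume "y \<in> V - (F k - J)" "z \<in> V - (F k - J)" "insert y B0 = insert z B0"
    thus "y = z" using Sk(2) kl(2) by (metis Diff_iff insert_iff insertCI)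
  qed
  ultimately have "card (V - (F k - J)) \<le> card {D\<in>Miss. B0 \<subseteq> D}"
    using card_inj_on_le finMiss by (metis (no_types, lifting) finite_subset mem_Collect_eq subsetI)
  moreover have "card (V - (F k - J)) = card V - d"
    using card_Diff_subset[OF _ Sk(12)] Sk(8) finV finite_subset[OF Sk(12)] by auto
  ultimately show ?thesis by simp
qed

lemma DB_bound: "card DB * (card V - d) \<le> d * card Miss"
proof -
  have "card DB * (card V - d) = (\<Sum>B0\<in>DB. card V - d)" by simp
  also have "\<dots> \<le> (\<Sum>B0\<in>DB. card {D\<in>Miss. B0 \<subseteq> D})" by (rule sum_mono) (rule DB_count)
  also have "\<dots> = (\<Sum>D\<in>Miss. card {B0\<in>DB. B0 \<subseteq> D})" by (rule double_count[OF finDB finMiss])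
  also have "\<dots> \<le> (\<Sum>D\<in>Miss. card {B0. B0 \<subseteq> D \<and> card B0 = d - 1})"
  proof (rule sum_mono)
    fix D assume D: "D \<in> Miss"
    have fD: "finite D" using D unfolding Miss_def using finV finite_subset by blast
    have "{B0\<in>DB. B0 \<subseteq> D} \<subseteq> {B0. B0 \<subseteq> D \<and> card B0 = d - 1}"
      using I3_struct(10) unfolding DB_def Psame_def P_def by auto
    thus "card {B0\<in>DB. B0 \<subseteq> D} \<le> card {B0. B0 \<subseteq> D \<and> card B0 = d - 1}"
      by (rule card_mono[rotated]) (use fD in simp)
  qed
  also have "\<dots> = (\<Sum>D\<in>Miss. d)"
  proof (rule sum.cong)
    fix D assume D: "D \<in> Miss"
    have fD: "finite D" "card D = d" using D unfolding Miss_def using finV finite_subset by auto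
    have "card {B0. B0 \<subseteq> D \<and> card B0 = d - 1} = d choose (d - 1)" using n_subsets[OF fD(1)] fD(2) by simp
    also have "\<dots> = d" using binomial_symmetric[of "d-1" d] d2 by simp
    finally show "card {B0. B0 \<subseteq> D \<and> card B0 = d - 1} = d" .
  qed simp
  also have "\<dots> = d * card Miss" by simp
  finally show ?thesis .
qed

end


context setting begin

definition "goodpair B0 a b k l \<longleftrightarrow> k \<in> I3 \<and> l \<in> I3 \<and> a \<noteq> b \<and> a \<in> V \<and> b \<in> V \<and> a \<notin> B0 \<and> b \<notin> B0
   \<and> B0 \<subseteq> V \<and> card B0 = d - 2 \<and> F k - J = insert a (insert b B0) \<and> F l - J = insert a (insert b B0)
   \<and> B k = insert b B0 \<and> B l = insert a B0 \<and> jj k \<noteq> jj l"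

lemma goodpair_sym: "goodpair B0 a b k l \<Longrightarrow> goodpair B0 b a l k"
  unfolding goodpair_def by (auto simp: insert_commute)

definition "R = {(B0, {a,b}) | B0 a b k l. goodpair B0 a b k l}"
definition "hh z = (F (fst z) - J - {xx (fst z), xx (snd z)}, {xx (fst z), xx (snd z)})"

lemma B_eq: "q \<in> I3 \<Longrightarrow> B q = (F q - J) - {xx q}"
  using I3_struct(2,3) by auto

lemma Pdiff_good:
  assumes "(k,l) \<in> Pdiff"
  shows "goodpair (F k - J - {xx k, xx l}) (xx k) (xx l) k l"
proof -
  have kl: "(k,l) \<in> P" "B k \<noteq> B l" using assms unfolding Pdiff_def by auto
  have k3: "k \<in> I3" and l3: "l \<in> I3" and e: "F k - J = F l - J" using kl(1) unfolding P_def by auto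
  note Sk = I3_struct[OF k3] and Sl = I3_struct[OF l3]
  define a where "a = xx k"
  define b where "b = xx l"
  define e where "e = F k - J"
  have ab: "a \<noteq> b" using B_eq[OF k3] B_eq[OF l3] e kl(2) a_def b_def by auto
  have ae: "a \<in> e" "b \<in> e" using Sk(2) Sl(2) e a_def b_def e_def by auto
  have Bk: "B k = insert b (e - {a, b})" using B_eq[OF k3] ae ab a_def e_def by auto
  have Bl: "B l = insert a (e - {a, b})" using B_eq[OF l3] ae ab b_def e_def e by auto
  have fe: "finite e" using Sk(12) finV finite_subset e_def by blast
  have ce: "card (e - {a,b}) = d - 2"
  proof -
    have "card (e - {a,b}) = card e - card {a,b}" by (rule card_Diff_subset) (use ae in auto)
    thus ?thesis using Sk(8) ab e_def by simp
  qed
  show ?thesis unfolding goodpair_def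
    using k3 l3 ab ae Bk Bl ce Sk(12) e jj_ne[OF kl(1)] a_def b_def e_def by auto
qed

lemma finR: "finite R"
proof -
  have "R \<subseteq> Pow V \<times> Pow V" unfolding R_def goodpair_def by auto
  thus ?thesis using finV finite_subset by blast
qed

lemma card_le2:
  "card {q \<in> I3. F q - J = e \<and> xx q = x} \<le> 2"
proof -
  let ?A = "{q \<in> I3. F q - J = e \<and> xx q = x}"
  have fA: "finite ?A" using finI3 by simp
  show ?thesis
  proof (cases "\<exists>q1\<in>?A. \<exists>q2\<in>?A. q1 \<noteq> q2")
    case True
    then obtain q1 q2 where q: "q1 \<in> ?A" "q2 \<in> ?A" "q1 \<noteq> q2" by blast
    have ps: "(q1,q2) \<in> Psame" using q B_eq unfolding Psame_def P_def by auto
    have "?A \<subseteq> {q1,q2}"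
    proof
      fix q assume "q \<in> ?A"
      hence "q \<in> I3" "B q = B q1" using q B_eq by auto
      thus "q \<in> {q1,q2}" using L2[OF ps] by auto
    qed
    hence "card ?A \<le> card {q1,q2}" by (rule card_mono[rotated]) simp
    thus ?thesis using c2[of q1 q2] by linarith
  next
    case False
    hence "card ?A \<le> Suc 0" using card_le_Suc0_iff_eq[OF fA] by blast
    thus ?thesis by simp
  qed
qed

lemma Pdiff_card: "card Pdiff \<le> 16 * card R"
proof -
  have fPd: "finite Pdiff" using finP finite_subset[of Pdiff P] unfolding Pdiff_def by auto
  have "card Pdiff \<le> 16 * card (hh ` Pdiff)"
  proof (rule fiber_bound[OF fPd])
    fix y assume "y \<in> hh ` Pdiff"
    then obtain k0 l0 where kl0: "(k0,l0) \<in> Pdiff" "y = hh (k0,l0)" by auto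
    define e where "e = F k0 - J"
    define a where "a = xx k0"
    define b where "b = xx l0"
    define A where "A = {q \<in> I3. F q - J = e \<and> xx q = a} \<union> {q \<in> I3. F q - J = e \<and> xx q = b}"
    have g0: "goodpair (F k0 - J - {xx k0, xx l0}) (xx k0) (xx l0) k0 l0" by (rule Pdiff_good[OF kl0(1)])
    have abe: "a \<in> e" "b \<in> e"
    proof -
      have k3: "k0 \<in> I3" "l0 \<in> I3" "F k0 - J = F l0 - J" using kl0(1) unfolding Pdiff_def P_def by auto
      show "a \<in> e" using I3_struct(2)[OF k3(1)] a_def e_def by auto
      show "b \<in> e" using I3_struct(2)[OF k3(2)] k3(3) b_def e_def by auto
    qed
    have sub: "{z\<in>Pdiff. hh z = y} \<subseteq> A \<times> A"
    proof
      fix z assume z: "z \<in> {z\<in>Pdiff. hh z = y}"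
      obtain k l where zkl: "z = (k,l)" by (cases z)
      have zz: "(k,l) \<in> Pdiff" "hh (k,l) = hh (k0,l0)" using z zkl kl0 by auto
      have g: "goodpair (F k - J - {xx k, xx l}) (xx k) (xx l) k l" by (rule Pdiff_good[OF zz(1)])
      have pe: "{xx k, xx l} = {a, b}" "F k - J - {xx k, xx l} = e - {a,b}"
        using zz(2) unfolding hh_def a_def b_def e_def by auto
      have ek: "F k - J = e" "F l - J = e"
      proof -
        have "F k - J = insert (xx k) (insert (xx l) (F k - J - {xx k, xx l}))" using g unfolding goodpair_def by (elim conjE) assumption
        also have "\<dots> = {xx k, xx l} \<union> (F k - J - {xx k, xx l})" by blast
        also have "\<dots> = {a,b} \<union> (e - {a,b})" by (subst pe(2), subst pe(1), rule refl)
        also have "\<dots> = e" using abe by blast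
        finally show "F k - J = e" .
        thus "F l - J = e" using g unfolding goodpair_def by auto
      qed
      have "k \<in> A" "l \<in> A" using g ek pe unfolding A_def goodpair_def by (auto simp: doubleton_eq_iff)
      thus "z \<in> A \<times> A" using zkl by auto
    qed
    have fA: "finite A" unfolding A_def using finI3 by simp
    have cA: "card A \<le> 4"
      using card_Un_le[of "{q \<in> I3. F q - J = e \<and> xx q = a}" "{q \<in> I3. F q - J = e \<and> xx q = b}"]
        card_le2[of e a] card_le2[of e b] unfolding A_def by linarith
    have "card {z\<in>Pdiff. hh z = y} \<le> card (A \<times> A)" by (rule card_mono) (use fA sub in auto)
    also have "\<dots> = card A * card A" by (rule card_cartesian_product)
    also have "\<dots> \<le> 4 * 4" using cA mult_le_mono by blast
    finally show "card {z\<in>Pdiff. hh z = y} \<le> 16" by simp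
  qed
  also have "card (hh ` Pdiff) \<le> card R"
  proof (rule card_mono[OF finR])
    show "hh ` Pdiff \<subseteq> R"
    proof
      fix y assume "y \<in> hh ` Pdiff"
      then obtain k l where kl: "(k,l) \<in> Pdiff" "y = hh (k,l)" by auto
      show "y \<in> R" using Pdiff_good[OF kl(1)] kl(2) unfolding R_def hh_def by auto
    qed
  qed
  hence "16 * card (hh ` Pdiff) \<le> 16 * card R" by simp
  finally show ?thesis .
qed

end


context setting begin

definition "W B0 = {p. (B0,p) \<in> R}"
definition "S2 = {B0. B0 \<subseteq> V \<and> card B0 = d - 2}"
definition "mm B0 = card {D\<in>Miss. B0 \<subseteq> D}"

lemma R_mem:
  assumes "(B0,p) \<in> R" "u \<in> p"
  shows "\<exists>b k l. p = {u,b} \<and> goodpair B0 u b k l"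
proof -
  obtain a b k l where g: "p = {a,b}" "goodpair B0 a b k l" using assms(1) unfolding R_def by blast
  show ?thesis
  proof (cases "u = a")
    case True thus ?thesis using g by blast
  next
    case False
    hence "u = b" using g assms(2) by auto
    thus ?thesis using g goodpair_sym[OF g(2)] by (metis insert_commute)
  qed
qed

lemma color:
  assumes "r \<in> I3" "q \<in> {1..m}" "F q - J = insert y (B r)" "y \<notin> F r - J"
  shows "jj r \<in> F q"
proof (rule block3[OF assms(1,2)])
  show "B r \<subseteq> F q" using assms(3) by auto
  note S = I3_struct[OF assms(1)]
  show "xx r \<notin> F q"
  proof
    assume "xx r \<in> F q"
    moreover have "xx r \<notin> J" using S(4) VJ by auto
    ultimately have "xx r \<in> insert y (B r)" using assms(3) by auto
    thus False using S(2,3) assms(4) by auto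
  qed
qed

lemma color3:
  assumes "r \<in> I3" "q \<in> I3" "F q - J = insert y (B r)" "y \<notin> F r - J"
  shows "jj r = jj q"
proof -
  have "jj r \<in> F q" using color[OF assms(1) I3_struct(11)[OF assms(2)] assms(3,4)] .
  moreover have "jj r \<in> J" using I3_struct(5)[OF assms(1)] .
  ultimately show ?thesis using I3_struct(1)[OF assms(2)] by auto
qed

lemma matching:
  assumes "(B0,p) \<in> R" "(B0,q) \<in> R" "p \<noteq> q"
  shows "p \<inter> q = {}"
proof (rule ccontr)
  assume "p \<inter> q \<noteq> {}"
  then obtain u where u: "u \<in> p" "u \<in> q" by blast
  obtain b k l where gp: "p = {u,b}" "goodpair B0 u b k l" using R_mem[OF assms(1) u(1)] by blast
  obtain c k' l' where gq: "q = {u,c}" "goodpair B0 u c k' l'" using R_mem[OF assms(2) u(2)] by blast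
  have cb: "c \<noteq> b" using gp gq assms(3) by auto
  have G: "l \<in> I3" "B l = insert u B0" "F l - J = insert u (insert b B0)" "u \<noteq> b"
    using gp(2) unfolding goodpair_def by auto
  have G': "k' \<in> I3" "l' \<in> I3" "F k' - J = insert u (insert c B0)" "F l' - J = insert u (insert c B0)"
     "u \<noteq> c" "c \<notin> B0" "jj k' \<noteq> jj l'"
    using gq(2) unfolding goodpair_def by auto
  have nc: "c \<notin> F l - J" using G(3) G'(5,6) cb by auto
  have e1: "F k' - J = insert c (B l)" using G'(3) G(2) by auto
  have e2: "F l' - J = insert c (B l)" using G'(4) G(2) by auto
  have "jj l = jj k'" using color3[OF G(1) G'(1) e1 nc] .
  moreover have "jj l = jj l'" using color3[OF G(1) G'(2) e2 nc] .
  ultimately show False using G'(7) by simp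
qed

lemma EE_D:
  assumes "D \<subseteq> V" "card D = d" "D \<notin> Miss"
  obtains q where "q \<in> {1..m}" "card (F q \<inter> J) = 1" "D = F q - J"
  using assms unfolding Miss_def EE_def edges_G_def by blast

lemma jj_in:
  assumes "r \<in> I3" "q \<in> {1..m}" "F q - J = insert y (B r)" "y \<notin> F r - J"
  shows "jj r \<in> F q \<inter> J"
  using color[OF assms] I3_struct(5)[OF assms(1)] by auto

lemma missing:
  assumes "(B0,p) \<in> R" "(B0,q) \<in> R" "p \<noteq> q" "u' \<in> q"
  shows "\<exists>u\<in>p. insert u (insert u' B0) \<in> Miss"
proof (rule ccontr)
  assume nm: "\<not> (\<exists>u\<in>p. insert u (insert u' B0) \<in> Miss)"
  obtain a b k l where g: "p = {a,b}" "goodpair B0 a b k l" using assms(1) unfolding R_def by blast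
  obtain c k' l' where gq: "q = {u',c}" "goodpair B0 u' c k' l'" using R_mem[OF assms(2,4)] by blast
  have disj: "p \<inter> q = {}" by (rule matching[OF assms(1-3)])
  have G: "k \<in> I3" "l \<in> I3" "B k = insert b B0" "B l = insert a B0" "F k - J = insert a (insert b B0)"
    "F l - J = insert a (insert b B0)" "jj k \<noteq> jj l" "a \<in> V" "b \<in> V" "a \<notin> B0" "b \<notin> B0" "B0 \<subseteq> V"
    "card B0 = d - 2" "a \<noteq> b"
    using g(2) unfolding goodpair_def by auto
  have G': "l' \<in> I3" "B l' = insert u' B0" "F l' - J = insert u' (insert c B0)" "u' \<in> V" "u' \<notin> B0" "c \<notin> B0"
    using gq(2) unfolding goodpair_def by auto
  have nq: "a \<notin> q" "b \<notin> q" using disj g(1) by auto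
  have np: "u' \<notin> p" using disj assms(4) by auto
  have fB0: "finite B0" using G(12) finV finite_subset by blast
  have cardD: "\<And>x. x \<notin> B0 \<Longrightarrow> x \<noteq> u' \<Longrightarrow> card (insert x (insert u' B0)) = d"
    using fB0 G(13) G'(5) d2 by simp
  have "insert a (insert u' B0) \<notin> Miss" using nm g(1) by auto
  then obtain q1 where q1: "q1 \<in> {1..m}" "card (F q1 \<inter> J) = 1" "insert a (insert u' B0) = F q1 - J"
    using EE_D[of "insert a (insert u' B0)"] G(8,10,12) G'(4) cardD np g(1) by blast
  have "insert b (insert u' B0) \<notin> Miss" using nm g(1) by auto
  then obtain q2 where q2: "q2 \<in> {1..m}" "card (F q2 \<inter> J) = 1" "insert b (insert u' B0) = F q2 - J"
    using EE_D[of "insert b (insert u' B0)"] G(9,11,12) G'(4) cardD np g(1) by blast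
  have j1: "jj l \<in> F q1 \<inter> J" by (rule jj_in[OF G(2) q1(1)]) (use q1(3) G(4,6) np g(1) G'(5) in auto)
  have j2: "jj l' \<in> F q1 \<inter> J" by (rule jj_in[OF G'(1) q1(1)]) (use q1(3) G'(2,3) nq gq(1) G(10) in auto)
  have j3: "jj k \<in> F q2 \<inter> J" by (rule jj_in[OF G(1) q2(1)]) (use q2(3) G(3,5) np g(1) G'(5) in auto)
  have j4: "jj l' \<in> F q2 \<inter> J" by (rule jj_in[OF G'(1) q2(1)]) (use q2(3) G'(2,3) nq gq(1) G(11) in auto)
  have "jj l = jj l'" using card1_eq[OF q1(2) j1 j2] .
  moreover have "jj k = jj l'" using card1_eq[OF q2(2) j3 j4] .
  ultimately show False using G(7) by simp
qed

end


context setting begin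

lemma finW: "finite (W B0)"
proof -
  have "W B0 \<subseteq> snd ` R" unfolding W_def by force
  thus ?thesis using finR finite_subset by blast
qed

lemma W_elem: "p \<in> W B0 \<Longrightarrow> \<exists>a b. p = {a,b} \<and> a \<notin> B0 \<and> b \<notin> B0"
  unfolding W_def R_def goodpair_def by blast

lemma W_same: "p \<in> W B0 \<Longrightarrow> q \<in> W B0 \<Longrightarrow> x \<in> p \<Longrightarrow> x \<in> q \<Longrightarrow> p = q"
  using matching unfolding W_def by blast

lemma W_bound: "card (W B0) * (card (W B0) - 1) \<le> 2 * mm B0"
proof -
  let ?W = "W B0"
  define Off where "Off = ?W \<times> ?W - (\<lambda>p. (p,p)) ` ?W"
  have fOff: "finite Off" unfolding Off_def using finW by simp
  have cOff: "card Off = card ?W * (card ?W - 1)"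
  proof -
    have "card Off = card (?W \<times> ?W) - card ((\<lambda>p. (p,p)) ` ?W)"
      unfolding Off_def by (rule card_Diff_subset) (use finW in auto)
    also have "card ((\<lambda>p. (p,p)) ` ?W) = card ?W" by (rule card_image) (auto simp: inj_on_def)
    finally show ?thesis by (simp add: card_cartesian_product diff_mult_distrib2)
  qed
  define phi where "phi z = (SOME D. D \<in> Miss \<and> (\<exists>u\<in>fst z. \<exists>u'\<in>snd z. D = insert u (insert u' B0)))" for z
  have phiP: "phi z \<in> Miss \<and> (\<exists>u\<in>fst z. \<exists>u'\<in>snd z. phi z = insert u (insert u' B0))" if z: "z \<in> Off" for z
  proof -
    obtain p q where pq: "z = (p,q)" "p \<in> ?W" "q \<in> ?W" "p \<noteq> q" using z unfolding Off_def by auto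
    obtain a b where ab: "q = {a,b}" using W_elem[OF pq(3)] by blast
    obtain u where u: "u \<in> p" "insert u (insert a B0) \<in> Miss"
      using missing[of B0 p q a] pq ab unfolding W_def by auto
    have "\<exists>D. D \<in> Miss \<and> (\<exists>u\<in>fst z. \<exists>u'\<in>snd z. D = insert u (insert u' B0))"
      using u pq ab by auto
    thus ?thesis unfolding phi_def by (rule someI_ex)
  qed
  have "card Off \<le> 2 * card (phi ` Off)"
  proof (rule fiber_bound[OF fOff])
    fix y assume "y \<in> phi ` Off"
    then obtain p q where pq: "(p,q) \<in> Off" "y = phi (p,q)" by auto
    have pqW: "p \<in> ?W" "q \<in> ?W" "p \<noteq> q" using pq(1) unfolding Off_def by auto
    obtain u u' where uu: "u \<in> p" "u' \<in> q" "y = insert u (insert u' B0)" using phiP[OF pq(1)] pq(2) by auto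
    have sub: "{z\<in>Off. phi z = y} \<subseteq> {(p,q),(q,p)}"
    proof
      fix z assume z: "z \<in> {z\<in>Off. phi z = y}"
      obtain p2 q2 where zz: "z = (p2,q2)" by (cases z)
      have W2: "p2 \<in> ?W" "q2 \<in> ?W" "p2 \<noteq> q2" using z zz unfolding Off_def by auto
      obtain u2 u2' where uu2: "u2 \<in> p2" "u2' \<in> q2" "y = insert u2 (insert u2' B0)"
        using phiP[of z] z zz by auto
      have nB: "u2 \<notin> B0" "u2' \<notin> B0" using W_elem[OF W2(1)] W_elem[OF W2(2)] uu2 by auto
      have i1: "u2 = u \<or> u2 = u'" "u2' = u \<or> u2' = u'" using uu(3) uu2(3) nB by auto
      have "p2 = p \<or> p2 = q"
      proof (cases "u2 = u")
        case True thus ?thesis using W_same[OF W2(1) pqW(1), of u2] uu2(1) uu(1) by simp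
      next
        case False thus ?thesis using i1(1) W_same[OF W2(1) pqW(2), of u2] uu2(1) uu(2) by simp
      qed
      moreover have "q2 = p \<or> q2 = q"
      proof (cases "u2' = u")
        case True thus ?thesis using W_same[OF W2(2) pqW(1), of u2'] uu2(2) uu(1) by simp
      next
        case False thus ?thesis using i1(2) W_same[OF W2(2) pqW(2), of u2'] uu2(2) uu(2) by simp
      qed
      ultimately have "p2 = p \<or> p2 = q" "q2 = p \<or> q2 = q" by blast+
      thus "z \<in> {(p,q),(q,p)}" using zz W2(3) by auto
    qed
    have fin2: "finite {(p,q),(q,p)}" by simp
    have "card {z\<in>Off. phi z = y} \<le> card {(p,q),(q,p)}" by (rule card_mono[OF fin2 sub])
    also have "\<dots> \<le> 2" by (rule c2)
    finally show "card {z\<in>Off. phi z = y} \<le> 2" .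
  qed
  also have "card (phi ` Off) \<le> mm B0" unfolding mm_def
  proof (rule card_mono)
    show "finite {D \<in> Miss. B0 \<subseteq> D}" using finMiss by simp
    show "phi ` Off \<subseteq> {D \<in> Miss. B0 \<subseteq> D}" using phiP by fastforce
  qed
  hence "2 * card (phi ` Off) \<le> 2 * mm B0" by simp
  finally show ?thesis using cOff by simp
qed

lemma finS2: "finite S2"
proof -
  have "S2 \<subseteq> Pow V" unfolding S2_def by auto
  thus ?thesis using finV finite_subset by blast
qed

lemma R_card: "card R = (\<Sum>B0\<in>S2. card (W B0))"
proof -
  have RS: "\<And>B0 p. (B0,p) \<in> R \<Longrightarrow> B0 \<in> S2" unfolding R_def S2_def goodpair_def by auto
  have "R = Sigma S2 W" unfolding W_def using RS by auto
  thus ?thesis using finS2 finW by simp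
qed

lemma mm_sum: "(\<Sum>B0\<in>S2. mm B0) \<le> d * d * card Miss"
proof -
  have "(\<Sum>B0\<in>S2. mm B0) = (\<Sum>D\<in>Miss. card {B0\<in>S2. B0 \<subseteq> D})"
    unfolding mm_def by (rule double_count[OF finS2 finMiss])
  also have "\<dots> \<le> (\<Sum>D\<in>Miss. d * d)"
  proof (rule sum_mono)
    fix D assume D: "D \<in> Miss"
    have fD: "finite D" "card D = d" using D unfolding Miss_def using finV finite_subset by auto
    have "{B0\<in>S2. B0 \<subseteq> D} \<subseteq> {B0. B0 \<subseteq> D \<and> card B0 = d - 2}" unfolding S2_def by auto
    hence "card {B0\<in>S2. B0 \<subseteq> D} \<le> card {B0. B0 \<subseteq> D \<and> card B0 = d - 2}"
      by (rule card_mono[rotated]) (use fD in simp)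
    also have "\<dots> = d choose (d - 2)" using n_subsets[OF fD(1)] fD(2) by simp
    also have "\<dots> = d choose 2" using binomial_symmetric[of "d-2" d] d2 by simp
    also have "\<dots> \<le> d ^ 2" by (rule binomial_le_pow) (use d2 in simp)
    finally show "card {B0\<in>S2. B0 \<subseteq> D} \<le> d * d" by (simp add: power2_eq_square)
  qed
  also have "\<dots> = d * d * card Miss" by simp
  finally show ?thesis .
qed

lemma S2_card: "card S2 \<le> card V ^ (d - 2)"
proof -
  have "card S2 = card V choose (d - 2)" unfolding S2_def using n_subsets[OF finV] by simp
  also have "\<dots> \<le> card V ^ (d - 2)"
  proof (cases "d - 2 \<le> card V")
    case True thus ?thesis by (rule binomial_le_pow)
  next
    case False thus ?thesis by (simp add: binomial_eq_0)
  qed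
  finally show ?thesis .
qed

end


lemma term_bound:
  fixes s m :: nat and t :: real
  assumes "s * (s - 1) \<le> 2 * m" "t > 0"
  shows "real s \<le> 1 + t/2 + real m / t"
proof (cases "s = 0")
  case True thus ?thesis using assms(2) by simp
next
  case False
  define a where "a = real s - 1"
  have a0: "a \<ge> 0" using False a_def by simp
  have "a^2 \<le> real s * (real s - 1)" using False unfolding a_def by (simp add: power2_eq_square algebra_simps)
  also have "real s * (real s - 1) = real (s * (s - 1))" using False by (simp add: of_nat_diff)
  also have "\<dots> \<le> 2 * real m" using assms(1) by (metis of_nat_le_iff of_nat_mult of_nat_numeral)
  finally have a2: "a^2 \<le> 2 * real m" .
  have "0 \<le> (a - t)^2" by simp
  hence "2*t*a \<le> a^2 + t^2" by (simp add: power2_eq_square algebra_simps)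
  hence "2*t*a \<le> 2 * real m + t^2" using a2 by linarith
  hence "a \<le> (2 * real m + t^2) / (2*t)" using assms(2) by (simp add: field_simps)
  also have "\<dots> = real m / t + t/2" using assms(2) by (simp add: field_simps power2_eq_square)
  finally show ?thesis unfolding a_def by simp
qed

lemma sum_bound:
  fixes s mm :: "'a \<Rightarrow> nat" and t :: real
  assumes "finite S" "\<And>x. x\<in>S \<Longrightarrow> s x * (s x - 1) \<le> 2 * mm x" "t > 0"
  shows "real (\<Sum>x\<in>S. s x) \<le> real (card S) * (1 + t/2) + real (\<Sum>x\<in>S. mm x) / t"
proof -
  have "real (\<Sum>x\<in>S. s x) = (\<Sum>x\<in>S. real (s x))" by simp
  also have "\<dots> \<le> (\<Sum>x\<in>S. (1 + t/2) + real (mm x) / t)"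
    by (rule sum_mono) (use term_bound[OF assms(2) assms(3)] in auto)
  also have "\<dots> = real (card S) * (1 + t/2) + (\<Sum>x\<in>S. real (mm x)) / t"
    by (simp add: sum.distrib sum_divide_distrib)
  finally show ?thesis by simp
qed

context setting begin

lemma final_nat: "card (I2 \<union> I3) \<le> card Sd + 2 * card DB + 16 * (\<Sum>B0\<in>S2. card (W B0))"
proof -
  have "P = Psame \<union> Pdiff" unfolding Psame_def Pdiff_def by auto
  hence "card P \<le> card Psame + card Pdiff" using card_Un_le by metis
  thus ?thesis using main_inj Psame_card Pdiff_card R_card by linarith
qed

lemma final_real:
  assumes n: "4 * d \<le> n" and J: "real (card J) \<le> real n / 4" and K: "K \<ge> 0"
    and M: "real (card Miss) \<le> K * real n"
  shows "real (card (I2 \<union> I3)) \<le> real (card Sd) + (4 * real d + 16 * real d ^ 2 + 32) *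
          (K + sqrt (K * real n ^ (d - 1)) + real n ^ (d - 2))"
proof -
  define X where "X = sqrt (K * real n ^ (d - 1))"
  have n0: "real n > 0" using n d2 by simp
  have X0: "X \<ge> 0" unfolding X_def using K by simp
  have cV: "card V = n - card J" unfolding V_def using card_Diff_subset[OF finJ Jsub] by simp
  have cJn: "card J \<le> n" using card_mono[OF _ Jsub] by simp
  have cV': "real (card V) = real n - real (card J)" using cV cJn by simp
  have dV: "real d \<le> real (card V)" using cV' J n by simp
  have NV: "real (card V) - real d \<ge> real n / 2" using cV' J n by simp
  have DB1: "real (card DB) * (real (card V) - real d) \<le> real d * (K * real n)"
  proof -
    have "real (card DB * (card V - d)) \<le> real (d * card Miss)" using DB_bound by (simp only: of_nat_le_iff)
    hence "real (card DB) * (real (card V) - real d) \<le> real d * real (card Miss)"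
      using dV by (simp add: of_nat_diff)
    also have "\<dots> \<le> real d * (K * real n)" using M by (simp add: mult_left_mono)
    finally show ?thesis .
  qed
  have "real (card DB) * (real n / 2) \<le> real (card DB) * (real (card V) - real d)"
    using mult_left_mono[OF NV, of "real (card DB)"] by simp
  hence "real (card DB) * (real n / 2) \<le> real d * K * real n" using DB1 by simp
  hence DB2: "real (card DB) \<le> 2 * real d * K" using n0 by (simp add: field_simps)
  have cS2: "real (card S2) \<le> real n ^ (d - 2)"
  proof -
    have "card S2 \<le> card V ^ (d - 2)" by (rule S2_card)
    also have "\<dots> \<le> n ^ (d - 2)" using cV by (simp add: power_mono)
    finally show ?thesis by (metis of_nat_le_iff of_nat_power)
  qed
  have msum: "real (\<Sum>B0\<in>S2. mm B0) \<le> real d ^ 2 * (K * real n)"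
  proof -
    have "real (\<Sum>B0\<in>S2. mm B0) \<le> real (d * d * card Miss)" using mm_sum by (simp only: of_nat_le_iff)
    also have "\<dots> = real d ^ 2 * real (card Miss)" by (simp add: power2_eq_square)
    also have "\<dots> \<le> real d ^ 2 * (K * real n)" using M by (simp add: mult_left_mono)
    finally show ?thesis .
  qed
  have SB: "real (\<Sum>B0\<in>S2. card (W B0)) \<le> 2 * real n ^ (d - 2) + (real d ^ 2 + 1) * X"
  proof (cases "K = 0")
    case True
    have "real (\<Sum>B0\<in>S2. card (W B0)) \<le> real (card S2) * (1 + 1/2) + real (\<Sum>B0\<in>S2. mm B0) / 1"
      by (rule sum_bound[OF finS2 W_bound]) simp
    also have "\<dots> \<le> real n ^ (d - 2) * (1 + 1/2) + 0"
      using cS2 msum True by (intro add_mono mult_right_mono) auto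
    finally have h: "real (\<Sum>B0\<in>S2. card (W B0)) \<le> real n ^ (d - 2) * (1 + 1/2) + 0" .
    have "0 \<le> (real d ^ 2 + 1) * X" using X0 by simp
    moreover have "0 \<le> real n ^ (d - 2)" by simp
    moreover have "real n ^ (d - 2) * (1 + 1/2) = 3/2 * real n ^ (d - 2)" by simp
    ultimately show ?thesis using h by linarith
  next
    case False
    hence Kp: "K > 0" using K by simp
    have np: "real n ^ (d - 2) > 0" using n0 by simp
    have Xp: "X > 0" unfolding X_def using Kp n0 by simp
    have XX: "X^2 = K * real n ^ (d - 1)" unfolding X_def using K n0 by simp
    define t where "t = X / real n ^ (d - 2)"
    have tp: "t > 0" unfolding t_def using Xp np by simp
    have "real (\<Sum>B0\<in>S2. card (W B0)) \<le> real (card S2) * (1 + t/2) + real (\<Sum>B0\<in>S2. mm B0) / t"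
      by (rule sum_bound[OF finS2 W_bound tp])
    also have "\<dots> \<le> real n ^ (d - 2) * (1 + t/2) + real d ^ 2 * (K * real n) / t"
      using cS2 msum tp by (intro add_mono mult_right_mono divide_right_mono) auto
    also have "real n ^ (d - 2) * (1 + t/2) = real n ^ (d - 2) + X / 2"
      unfolding t_def using np n0 by (simp add: field_simps)
    also have "real d ^ 2 * (K * real n) / t = real d ^ 2 * X"
    proof -
      have pw: "real n ^ (d - 2) * real n = real n ^ (d - 1)"
        using d2 by (metis Suc_diff_Suc Suc_1 Suc_le_lessD diff_Suc_1 power_Suc2)
      have "real d ^ 2 * (K * real n) / t = real d ^ 2 * (K * (real n ^ (d - 2) * real n)) / X"
        unfolding t_def using np Xp by (simp add: field_simps)
      also have "\<dots> = real d ^ 2 * X^2 / X" using pw XX by simp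
      also have "\<dots> = real d ^ 2 * X" using Xp by (simp add: power2_eq_square)
      finally show ?thesis .
    qed
    finally have h: "real (\<Sum>B0\<in>S2. card (W B0)) \<le> real n ^ (d - 2) + X / 2 + real d ^ 2 * X" .
    have "0 \<le> real n ^ (d - 2)" by simp
    moreover have "(real d ^ 2 + 1) * X = real d ^ 2 * X + X" by (simp add: algebra_simps)
    ultimately show ?thesis using h X0 by linarith
  qed
  have "real (card (I2 \<union> I3)) \<le> real (card Sd) + 2 * real (card DB) + 16 * real (\<Sum>B0\<in>S2. card (W B0))"
    using final_nat by (metis (mono_tags, lifting) of_nat_add of_nat_le_iff of_nat_mult of_nat_numeral)
  also have "\<dots> \<le> real (card Sd) + 4 * real d * K + 16 * (2 * real n ^ (d - 2) + (real d ^ 2 + 1) * X)"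
  proof -
    have "2 * real (card DB) \<le> 4 * real d * K" using DB2 by (simp add: algebra_simps)
    thus ?thesis by (rule add_mono[OF add_mono[OF order_refl] mult_left_mono[OF SB]]) simp
  qed
  also have "\<dots> \<le> real (card Sd) + (4 * real d + 16 * real d ^ 2 + 32) * (K + X + real n ^ (d - 2))"
  proof -
    have a: "4 * real d * K \<le> (4 * real d + 16 * real d ^ 2 + 32) * K" using K by (simp add: mult_right_mono)
    have b: "16 * (real d ^ 2 + 1) * X \<le> (4 * real d + 16 * real d ^ 2 + 32) * X" using X0 by (simp add: mult_right_mono)
    have c: "32 * real n ^ (d - 2) \<le> (4 * real d + 16 * real d ^ 2 + 32) * real n ^ (d - 2)"
      using n0 by (simp add: mult_right_mono)
    have e: "(4 * real d + 16 * real d ^ 2 + 32) * (K + X + real n ^ (d - 2)) =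
      (4 * real d + 16 * real d ^ 2 + 32) * K + (4 * real d + 16 * real d ^ 2 + 32) * X + (4 * real d + 16 * real d ^ 2 + 32) * real n ^ (d - 2)"
      by (simp add: algebra_simps)
    have e2: "16 * (2 * real n ^ (d - 2) + (real d ^ 2 + 1) * X) = 32 * real n ^ (d - 2) + 16 * (real d ^ 2 + 1) * X"
      by (simp add: algebra_simps)
    show ?thesis using a b c e e2 by linarith
  qed
  finally show ?thesis unfolding X_def .
qed

end


theorem claim3p9:
  fixes d :: nat
  assumes "d \<ge> 2"
  shows "\<exists>C::real. C > 0 \<and> (\<exists>n0::nat. \<forall>n \<ge> n0. \<forall>(m::nat) (F::nat \<Rightarrow> nat set) (B::nat \<Rightarrow> nat set) (J::nat set) (K::real).
     (\<forall>i\<in>{1..m}. F i \<subseteq> {1..n} \<and> card (F i) = d + 1) \<longrightarrow>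
     inj_on F {1..m} \<longrightarrow>
     vc_dim_le n m F d \<longrightarrow>
     (\<forall>i\<in>{1..m}. admissible m F i (B i) \<and> (\<forall>B'. admissible m F i B' \<longrightarrow> card B' \<le> card (B i))) \<longrightarrow>
     J \<subseteq> {1..n} \<longrightarrow> real (card J) \<le> real n / 4 \<longrightarrow>
     K \<ge> 0 \<longrightarrow>
     real (card (edges_G m F J)) \<ge> real ((n - card J) choose d) - K * real n \<longrightarrow>
     real (card (T2 n d m F B J \<union> T3 n d m F B J))
       \<le> real ((n - card J) choose d) + C * (K + sqrt (K * real n ^ (d - 1)) + real n ^ (d - 2)))"
proof (rule exI[of _ "4 * real d + 16 * real d ^ 2 + 32"], rule conjI)
  have "0 \<le> 4 * real d + 16 * real d ^ 2" by simp
  thus "4 * real d + 16 * real d ^ 2 + 32 > 0" by linarith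
  show "\<exists>n0::nat. \<forall>n \<ge> n0. \<forall>(m::nat) (F::nat \<Rightarrow> nat set) (B::nat \<Rightarrow> nat set) (J::nat set) (K::real).
     (\<forall>i\<in>{1..m}. F i \<subseteq> {1..n} \<and> card (F i) = d + 1) \<longrightarrow>
     inj_on F {1..m} \<longrightarrow>
     vc_dim_le n m F d \<longrightarrow>
     (\<forall>i\<in>{1..m}. admissible m F i (B i) \<and> (\<forall>B'. admissible m F i B' \<longrightarrow> card B' \<le> card (B i))) \<longrightarrow>
     J \<subseteq> {1..n} \<longrightarrow> real (card J) \<le> real n / 4 \<longrightarrow>
     K \<ge> 0 \<longrightarrow>
     real (card (edges_G m F J)) \<ge> real ((n - card J) choose d) - K * real n \<longrightarrow>
     real (card (T2 n d m F B J \<union> T3 n d m F B J))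
       \<le> real ((n - card J) choose d) + (4 * real d + 16 * real d ^ 2 + 32) * (K + sqrt (K * real n ^ (d - 1)) + real n ^ (d - 2))"
  proof (rule exI[of _ "4 * d"], intro allI impI)
    fix n m :: nat and F B :: "nat \<Rightarrow> nat set" and J :: "nat set" and K :: real
    assume n: "4 * d \<le> n"
      and H1: "\<forall>i\<in>{1..m}. F i \<subseteq> {1..n} \<and> card (F i) = d + 1"
      and H2: "inj_on F {1..m}"
      and H4: "\<forall>i\<in>{1..m}. admissible m F i (B i) \<and> (\<forall>B'. admissible m F i B' \<longrightarrow> card B' \<le> card (B i))"
      and H5: "J \<subseteq> {1..n}" and H6: "real (card J) \<le> real n / 4" and H7: "K \<ge> 0"
      and H8: "real (card (edges_G m F J)) \<ge> real ((n - card J) choose d) - K * real n"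
    interpret S: setting n m d F B J
    proof
      show "2 \<le> d" using assms .
      show "\<And>i. i \<in> {1..m} \<Longrightarrow> F i \<subseteq> {1..n}" using H1 by blast
      show "\<And>i. i \<in> {1..m} \<Longrightarrow> card (F i) = d + 1" using H1 by blast
      show "inj_on F {1..m}" using H2 .
      show "\<And>i. i \<in> {1..m} \<Longrightarrow> B i \<subset> F i" using H4 unfolding admissible_def by blast
      show "\<And>i k. i \<in> {1..m} \<Longrightarrow> k \<in> {1..m} \<Longrightarrow> F k \<inter> F i \<noteq> B i" using H4 unfolding admissible_def by blast
      show "\<And>i B'. i \<in> {1..m} \<Longrightarrow> admissible m F i B' \<Longrightarrow> card B' \<le> card (B i)" using H4 by blast
      show "J \<subseteq> {1..n}" using H5 .
    qed
    have T: "T2 n d m F B J \<union> T3 n d m F B J = F ` (S.I2 \<union> S.I3)"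
      unfolding T2_def T3_def S.I2_def S.I3_def S.V_def by auto
    have c1: "card (T2 n d m F B J \<union> T3 n d m F B J) \<le> card (S.I2 \<union> S.I3)"
      unfolding T by (rule card_image_le) (use S.finI2 S.finI3 in simp)
    have cV: "card S.V = n - card J" unfolding S.V_def using card_Diff_subset[OF S.finJ H5] by simp
    have cSd: "card S.Sd = (n - card J) choose d" unfolding S.Sd_def using n_subsets[OF S.finV] cV by simp
    have EEsub: "S.EE \<subseteq> S.Sd"
    proof
      fix D assume "D \<in> S.EE"
      then obtain k where k: "k \<in> {1..m}" "card (F k \<inter> J) = 1" "D = F k - J"
        unfolding S.EE_def edges_G_def by blast
      have fk: "finite (F k)" using S.finF k(1) .
      have "card (F k - J) = d" using card_Diff_subset_Int[of "F k" J] fk k(2) S.Fcard[OF k(1)]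
        by (simp add: Int_commute)
      moreover have "F k - J \<subseteq> S.V" using S.Fsub[OF k(1)] unfolding S.V_def by auto
      ultimately show "D \<in> S.Sd" unfolding S.Sd_def using k(3) by simp
    qed
    have cM: "card S.Miss = card S.Sd - card S.EE"
    proof -
      have "S.Miss = S.Sd - S.EE" unfolding S.Miss_def S.Sd_def by simp
      thus ?thesis using card_Diff_subset[OF finite_subset[OF EEsub S.finSd] EEsub] by simp
    qed
    have cle: "card S.EE \<le> card S.Sd" using card_mono[OF S.finSd EEsub] .
    have M: "real (card S.Miss) \<le> K * real n"
      using cM cle H8 cSd unfolding S.EE_def by (simp add: of_nat_diff)
    have fr: "real (card (S.I2 \<union> S.I3)) \<le> real (card S.Sd) + (4 * real d + 16 * real d ^ 2 + 32) *
          (K + sqrt (K * real n ^ (d - 1)) + real n ^ (d - 2))"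
      by (rule S.final_real[OF n H6 H7 M])
    show "real (card (T2 n d m F B J \<union> T3 n d m F B J))
       \<le> real ((n - card J) choose d) + (4 * real d + 16 * real d ^ 2 + 32) * (K + sqrt (K * real n ^ (d - 1)) + real n ^ (d - 2))"
    proof -
      have "real (card (T2 n d m F B J \<union> T3 n d m F B J)) \<le> real (card (S.I2 \<union> S.I3))"
        using c1 by (simp only: of_nat_le_iff)
      thus ?thesis using fr cSd by simp
    qed
  qed
qed


end
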